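(* Let $n$ be a positive integer and let $a\in\mathcal{T}_n$ have rank $n-1$. Then $\mu(\mathcal{T}_n^a)=n+1$.
   Context: For a positive integer $m$, $\mathcal{T}_m$ is the semigroup of all functions $\{1,\ldots,m\}\to\{1,\ldots,m\}$ under composition; $\operatorname{rank}(f)=|\operatorname{im}(f)|$. For a semigroup $S$ and $a\in S$, the variant $S^a$ is the set $S$ with operation $x\star_a y=xay$. For a finite semigroup $S$, the minimal degree $\mu(S)$ is the least positive integer $m$ such that $S$ embeds (via an injective homomorphism) in $\mathcal{T}_m$. *)

theory Defs
  imports "HOL-Library.FuncSet"
begin

definition Tfull :: "nat \<Rightarrow> (nat \<Rightarrow> nat) set" where
  "Tfull m = {1..m} \<rightarrow>\<^sub>E {1..m}"

definition tcomp :: "nat \<Rightarrow> (nat \<Rightarrow> nat) \<Rightarrow> (nat \<Rightarrow> nat) \<Rightarrow> (nat \<Rightarrow> nat)" where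
  "tcomp m f g = restrict (f \<circ> g) {1..m}"

definition trank :: "nat \<Rightarrow> (nat \<Rightarrow> nat) \<Rightarrow> nat" where
  "trank m f = card (f ` {1..m})"

definition variant_mult :: "nat \<Rightarrow> (nat \<Rightarrow> nat) \<Rightarrow> (nat \<Rightarrow> nat) \<Rightarrow> (nat \<Rightarrow> nat) \<Rightarrow> (nat \<Rightarrow> nat)" where
  "variant_mult m a x y = tcomp m (tcomp m x a) y"

definition embeds_in_T :: "'a set \<Rightarrow> ('a \<Rightarrow> 'a \<Rightarrow> 'a) \<Rightarrow> nat \<Rightarrow> bool" where
  "embeds_in_T S mult m \<longleftrightarrow>
     (\<exists>\<phi>. inj_on \<phi> S \<and> \<phi> ` S \<subseteq> Tfull m \<and>
          (\<forall>x\<in>S. \<forall>y\<in>S. \<phi> (mult x y) = tcomp m (\<phi> x) (\<phi> y)))"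

definition min_degree :: "'a set \<Rightarrow> ('a \<Rightarrow> 'a \<Rightarrow> 'a) \<Rightarrow> nat" where
  "min_degree S mult = (LEAST m. 0 < m \<and> embeds_in_T S mult m)"

end

theory Submission
  imports Defs
begin

lemma card_Tfull: "card (Tfull m) = m ^ m"
  unfolding Tfull_def by (simp add: card_PiE)

lemma finite_Tfull: "finite (Tfull m)"
  unfolding Tfull_def by (simp add: finite_PiE)

lemma tcomp_closed: "f \<in> Tfull n \<Longrightarrow> g \<in> Tfull n \<Longrightarrow> tcomp n f g \<in> Tfull n"
  unfolding Tfull_def tcomp_def by (auto simp: PiE_def Pi_def)

lemma upper:
  fixes n :: nat and a :: "nat \<Rightarrow> nat"
  assumes a: "a \<in> Tfull n"
    and r: "trank n a = n - 1" and n: "0 < n"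
  shows "embeds_in_T (Tfull n) (variant_mult n a) (n + 1)"
proof -
  have sub: "a ` {1..n} \<subseteq> {1..n}" using a unfolding Tfull_def by auto
  have "card (a ` {1..n}) < card {1..n}" using r n unfolding trank_def by simp
  then obtain p where p: "p \<in> {1..n}" "p \<notin> a ` {1..n}"
  proof -
    have "{1..n} - a ` {1..n} \<noteq> {}"
    proof
      assume "{1..n} - a ` {1..n} = {}"
      then have "{1..n} \<subseteq> a ` {1..n}" by blast
      then have "card {1..n} \<le> card (a ` {1..n})" by (intro card_mono) auto
      then show False using \<open>card (a ` {1..n}) < card {1..n}\<close> by simp
    qed
    then show ?thesis using that by blast
  qed
  have img: "a ` {1..n} = {1..n} - {p}"
  proof (rule card_subset_eq)
    show "finite ({1..n} - {p})" by simp
    show "a ` {1..n} \<subseteq> {1..n} - {p}" using sub p by auto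
    show "card (a ` {1..n}) = card ({1..n} - {p})" using r p unfolding trank_def by simp
  qed
  define \<phi> where "\<phi> x = (\<lambda>i::nat. if i \<in> {1..n} then x (a i) else if i = n+1 then x p else undefined)"
    for x :: "nat \<Rightarrow> nat"
  have mem: "\<phi> x \<in> Tfull (n+1)" if "x \<in> Tfull n" for x
  proof -
    have "\<And>i. i \<in> {1..n} \<Longrightarrow> x (a i) \<in> {1..n}" using that sub unfolding Tfull_def by (meson PiE_mem image_subset_iff)
    moreover have "x p \<in> {1..n}" using that p unfolding Tfull_def by auto
    ultimately show ?thesis unfolding Tfull_def \<phi>_def by (auto simp: PiE_def extensional_def, meson le_SucI)
  qed
  have inj: "inj_on \<phi> (Tfull n)"
  proof (rule inj_onI)
    fix x y assume x: "x \<in> Tfull n" and y: "y \<in> Tfull n" and e: "\<phi> x = \<phi> y"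
    show "x = y"
    proof (rule PiE_ext[OF x[unfolded Tfull_def] y[unfolded Tfull_def]])
      fix j assume j: "j \<in> {1..n}"
      show "x j = y j"
      proof (cases "j = p")
        case True
        have "\<phi> x (n+1) = \<phi> y (n+1)" using e by simp
        then show ?thesis using True unfolding \<phi>_def by simp
      next
        case False
        then have "j \<in> a ` {1..n}" using img j by auto
        then obtain i where i: "i \<in> {1..n}" "j = a i" by auto
        have "\<phi> x i = \<phi> y i" using e by simp
        then show ?thesis using i unfolding \<phi>_def by simp
      qed
    qed
  qed
  have hom: "\<phi> (variant_mult n a x y) = tcomp (n+1) (\<phi> x) (\<phi> y)"
    if x: "x \<in> Tfull n" and y: "y \<in> Tfull n" for x y
  proof
    fix i
    have ya: "i \<in> {1..n} \<Longrightarrow> y (a i) \<in> {1..n}" using y sub unfolding Tfull_def by (meson PiE_mem image_subset_iff)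
    have yp: "y p \<in> {1..n}" using y p unfolding Tfull_def by auto
    have ai: "i \<in> {1..n} \<Longrightarrow> a i \<in> {1..n}" using sub by blast
    consider "i \<in> {1..n}" | "i = n+1" | "i \<notin> {1..n+1}" by (metis atLeastAtMost_iff le_Suc_eq Suc_eq_plus1)
    then show "\<phi> (variant_mult n a x y) i = tcomp (n+1) (\<phi> x) (\<phi> y) i"
    proof cases
      case 1
      then show ?thesis using ya[OF 1] ai[OF 1]
        unfolding \<phi>_def variant_mult_def tcomp_def by (simp add: restrict_def)
    next
      case 2
      have ap: "a (y p) \<in> {1..n}" using yp sub by blast
      have "\<phi> (variant_mult n a x y) i = variant_mult n a x y p"
        using 2 unfolding \<phi>_def by simp
      also have "\<dots> = x (a (y p))"
        using yp p ap unfolding variant_mult_def tcomp_def by simp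
      also have "\<dots> = \<phi> x (y p)" using yp unfolding \<phi>_def by simp
      also have "\<dots> = \<phi> x (\<phi> y i)" using 2 unfolding \<phi>_def by simp
      also have "\<dots> = tcomp (n+1) (\<phi> x) (\<phi> y) i" using 2 unfolding tcomp_def by simp
      finally show ?thesis .
    next
      case 3
      then have i1: "i \<notin> {1..n}" "i \<noteq> n+1" by auto
      have "\<phi> (variant_mult n a x y) i = undefined" using i1 unfolding \<phi>_def by auto
      moreover have "tcomp (n+1) (\<phi> x) (\<phi> y) i = undefined" using 3 unfolding tcomp_def by auto
      ultimately show ?thesis by simp
    qed
  qed
  show ?thesis unfolding embeds_in_T_def
    using inj mem hom by blast
qed

lemma lower:
  fixes n :: nat and a :: "nat \<Rightarrow> nat"
  assumes a: "a \<in> Tfull n"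
    and r: "trank n a = n - 1" and n: "0 < n"
    and m: "0 < m" and emb: "embeds_in_T (Tfull n) (variant_mult n a) m"
  shows "n + 1 \<le> m"
proof (rule ccontr)
  assume "\<not> n + 1 \<le> m"
  then have mn: "m \<le> n" by simp
  obtain \<phi> where inj: "inj_on \<phi> (Tfull n)" and im: "\<phi> ` Tfull n \<subseteq> Tfull m"
    and hom: "\<forall>x\<in>Tfull n. \<forall>y\<in>Tfull n. \<phi> (variant_mult n a x y) = tcomp m (\<phi> x) (\<phi> y)"
    using emb unfolding embeds_in_T_def by blast
  have c1: "card (\<phi> ` Tfull n) = n ^ n" using inj card_image card_Tfull by metis
  have c2: "card (\<phi> ` Tfull n) \<le> m ^ m" using card_mono[OF finite_Tfull im] card_Tfull by metis
  have "m = n"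
  proof (rule ccontr)
    assume "m \<noteq> n" then have "m < n" using mn by simp
    then have "m ^ m < n ^ n"
      by (metis m le_less_trans less_imp_le_nat power_increasing power_strict_mono
          bot_nat_0.not_eq_extremum less_one not_less)
    then show False using c1 c2 by simp
  qed
  then have surj: "\<phi> ` Tfull n = Tfull n"
    using card_subset_eq[OF finite_Tfull im] c1 card_Tfull by metis
  define idn where "idn = restrict (\<lambda>i::nat. i) {1..n}"
  have idT: "idn \<in> Tfull n" unfolding idn_def Tfull_def by auto
  then obtain e where e: "e \<in> Tfull n" "\<phi> e = idn" using surj by (metis imageE)
  have mem_phi: "\<phi> idn \<in> Tfull n" using im idT \<open>m = n\<close> by blast
  have idl: "tcomp n idn f = f" if "f \<in> Tfull n" for f
  proof
    fix i show "tcomp n idn f i = f i"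
      using that unfolding idn_def tcomp_def Tfull_def
      by (cases "i \<in> {1..n}") (auto simp: restrict_def PiE_def extensional_def Pi_def)
  qed
  have "\<phi> (variant_mult n a e idn) = \<phi> idn"
    using hom e idT idl[OF mem_phi] \<open>m = n\<close> by simp
  moreover have "variant_mult n a e idn \<in> Tfull n"
    using e(1) a idT unfolding variant_mult_def by (simp add: tcomp_closed)
  ultimately have eq: "variant_mult n a e idn = idn"
    using inj idT inj_on_def by metis
  have "inj_on a {1..n}"
  proof (rule inj_onI)
    fix i j assume i: "i \<in> {1..n}" and j: "j \<in> {1..n}" and ij: "a i = a j"
    have "variant_mult n a e idn i = variant_mult n a e idn j"
      using i j ij unfolding variant_mult_def tcomp_def idn_def by simp
    then show "i = j" using eq i j unfolding idn_def by simp
  qed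
  then have "trank n a = n" unfolding trank_def by (simp add: card_image)
  then show False using r n by simp
qed

theorem proposition4p3:
  fixes n :: nat and a :: "nat \<Rightarrow> nat"
  assumes "0 < n"
    and "a \<in> Tfull n"
    and "trank n a = n - 1"
  shows "min_degree (Tfull n) (variant_mult n a) = n + 1"
  unfolding min_degree_def
proof (rule Least_equality)
  show "0 < n + 1 \<and> embeds_in_T (Tfull n) (variant_mult n a) (n + 1)"
    using upper assms by simp
  show "\<And>y. 0 < y \<and> embeds_in_T (Tfull n) (variant_mult n a) y \<Longrightarrow> n + 1 \<le> y"
    using lower assms by blast
qed

end
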